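(* Consider the network formation game with validators $V$, services $S$ (nonempty), stakes $\sigma$, reward pools $R$ and target restaking degree $d^*>0$. Assume that for every $s\in S$, $R(s)>0$ and $d^*\cdot\frac{R(s)}{\sum_{s'\in S}R(s')}\le1$. Then the allocation profile $$w^*(v,s)=d^*\cdot\frac{R(s)}{\sum_{s'\in S}R(s')}\cdot\sigma(v)\qquad(v\in V,\ s\in S)$$ is a Nash equilibrium of the game, and under it every validator has restaking degree exactly $d^*$.
   Context: Network formation game: $V$ is a finite nonempty set of validators with stakes $\sigma:V\to\mathbb{R}_{>0}$, $S$ is a finite set of services with reward pools $R:S\to\mathbb{R}_{>0}$, and $d^*>0$ is a target restaking degree. Each validator $v$ chooses allocations $w(v,s)\in[0,\sigma(v)]$ for all $s\in S$; the profile is $w:V\times S\to\mathbb{R}_{\ge0}$. The restaking degree of $v$ is $\deg(v)=\sum_{s\in S}w(v,s)/\sigma(v)$. The utility of $v$ is $$u_v(w)=\begin{cases}\sum_{s\in S}\frac{w(v,s)}{\sum_{v'\in V}w(v',s)}R(s)&\text{if }\deg(v)\le d^*,\\0&\text{otherwise,}\end{cases}$$ where a term with $w(v,s)=0$ is taken to be $0$. A Nash equilibrium is a profile in which no single validator can strictly increase its utility by unilaterally changing its own allocations. *)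

theory Defs
  imports Complex_Main
begin

definition feasible :: "'v set \<Rightarrow> 's set \<Rightarrow> ('v \<Rightarrow> real) \<Rightarrow> ('v \<Rightarrow> 's \<Rightarrow> real) \<Rightarrow> bool" where
  "feasible V S sigma w \<longleftrightarrow> (\<forall>v\<in>V. \<forall>s\<in>S. 0 \<le> w v s \<and> w v s \<le> sigma v)"

definition restaking_degree :: "'s set \<Rightarrow> ('v \<Rightarrow> real) \<Rightarrow> ('v \<Rightarrow> 's \<Rightarrow> real) \<Rightarrow> 'v \<Rightarrow> real" where
  "restaking_degree S sigma w v = (\<Sum>s\<in>S. w v s) / sigma v"

definition utility :: "'v set \<Rightarrow> 's set \<Rightarrow> ('v \<Rightarrow> real) \<Rightarrow> ('s \<Rightarrow> real) \<Rightarrow> real \<Rightarrow>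
    ('v \<Rightarrow> 's \<Rightarrow> real) \<Rightarrow> 'v \<Rightarrow> real" where
  "utility V S sigma R d w v =
     (if restaking_degree S sigma w v \<le> d
      then (\<Sum>s\<in>S. if w v s = 0 then 0 else w v s / (\<Sum>v'\<in>V. w v' s) * R s)
      else 0)"

definition nash_equilibrium :: "'v set \<Rightarrow> 's set \<Rightarrow> ('v \<Rightarrow> real) \<Rightarrow> ('s \<Rightarrow> real) \<Rightarrow> real \<Rightarrow>
    ('v \<Rightarrow> 's \<Rightarrow> real) \<Rightarrow> bool" where
  "nash_equilibrium V S sigma R d w \<longleftrightarrow>
     feasible V S sigma w \<and>
     (\<forall>v\<in>V. \<forall>w'. (\<forall>v'. v' \<noteq> v \<longrightarrow> w' v' = w v') \<and>
                  (\<forall>s\<in>S. 0 \<le> w' v s \<and> w' v s \<le> sigma v)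
               \<longrightarrow> utility V S sigma R d w' v \<le> utility V S sigma R d w v)"

end

theory Submission
  imports Defs
begin

lemma tangent:
  fixes x x0 a :: real
  assumes "x \<ge> 0" "x0 > 0" "a \<ge> 0"
  shows "(if x = 0 then 0 else x/(x+a)) \<le> x0/(x0+a) + a/(x0+a)^2 * (x - x0)"
proof (cases "x = 0")
  case True
  have p: "x0 + a > 0" using assms by simp
  have "a/(x0+a)^2 = (a/(x0+a)) * (1/(x0+a))" by (simp add: power2_eq_square)
  also have "\<dots> \<le> 1 * (1/(x0+a))" using p assms
    by (intro mult_right_mono) auto
  finally have "a/(x0+a)^2 * x0 \<le> (1/(x0+a)) * x0" using assms by (intro mult_right_mono) auto
  then have "0 \<le> x0/(x0+a) + a/(x0+a)^2 * (x - x0)" using True by simp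
  then show ?thesis using True by simp
next
  case False
  then have xp: "x > 0" using assms by simp
  have p: "x0 + a > 0" using assms by simp
  have r: "x0/(x0+a) + a/(x0+a)^2 * (x - x0) = (x0*(x0+a) + a*(x-x0))/(x0+a)^2"
    using p by (simp add: power2_eq_square add_divide_distrib)
  have id: "(x0*(x0+a) + a*(x-x0))*(x+a) - x*(x0+a)^2 = a*(x-x0)^2"
    by (simp add: algebra_simps power2_eq_square)
  have "0 \<le> a*(x-x0)^2" using assms by simp
  then have "x*(x0+a)^2 \<le> (x0*(x0+a) + a*(x-x0))*(x+a)" using id by linarith
  then have "x/(x+a) \<le> (x0*(x0+a) + a*(x-x0))/(x0+a)^2"
  proof -
    have g: "\<And>y N b c::real. b>0 \<Longrightarrow> c>0 \<Longrightarrow> y*c \<le> N*b \<Longrightarrow> y/b \<le> N/c"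
      by (simp add: field_simps)
    show ?thesis by (rule g) (use p xp assms \<open>x*(x0+a)^2 \<le> _\<close> in auto)
  qed
  then show ?thesis using False r by simp
qed

theorem mainTheorem19:
  fixes V :: "'v set" and S :: "'s set" and sigma :: "'v \<Rightarrow> real"
    and R :: "'s \<Rightarrow> real" and d :: real
  assumes "finite V" "V \<noteq> {}" "finite S" "S \<noteq> {}"
    and "\<And>v. v \<in> V \<Longrightarrow> sigma v > 0"
    and "\<And>s. s \<in> S \<Longrightarrow> R s > 0"
    and "d > 0"
    and "\<And>s. s \<in> S \<Longrightarrow> d * (R s / (\<Sum>s'\<in>S. R s')) \<le> 1"
  shows "nash_equilibrium V S sigma R d (\<lambda>v s. d * (R s / (\<Sum>s'\<in>S. R s')) * sigma v)
       \<and> (\<forall>v\<in>V. restaking_degree S sigma (\<lambda>v s. d * (R s / (\<Sum>s'\<in>S. R s')) * sigma v) v = d)"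
proof -
  define T where "T = (\<Sum>s'\<in>S. R s')"
  define c where "c s = d * (R s / T)" for s
  define w0 where "w0 v s = c s * sigma v" for v s
  have Tpos: "T > 0" unfolding T_def using assms(3,4,6) by (simp add: sum_pos)
  have cpos: "c s > 0" if "s \<in> S" for s using that assms Tpos by (simp add: c_def)
  have c1: "c s \<le> 1" if "s \<in> S" for s using that assms by (simp add: c_def T_def)
  have sumc: "(\<Sum>s\<in>S. c s) = d"
    using Tpos by (simp add: c_def sum_distrib_left[symmetric] sum_divide_distrib[symmetric] T_def)
  have W: "(\<lambda>v s. d * (R s / (\<Sum>s'\<in>S. R s')) * sigma v) = w0"
    by (intro ext) (simp add: w0_def c_def T_def)
  have deg: "restaking_degree S sigma w0 v = d" if "v \<in> V" for v
  proof -
    have "(\<Sum>s\<in>S. w0 v s) = d * sigma v"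
      by (simp add: w0_def sum_distrib_right[symmetric] sumc)
    then show ?thesis using assms(5)[OF that] by (simp add: restaking_degree_def)
  qed
  have feas: "feasible V S sigma w0"
    unfolding feasible_def w0_def
  proof (intro ballI conjI)
    fix v s assume v: "v \<in> V" and s: "s \<in> S"
    have a: "0 < c s" "c s \<le> 1" "0 < sigma v" using cpos[OF s] c1[OF s] assms(5)[OF v] by auto
    then show "0 \<le> c s * sigma v" by simp
    have "c s * sigma v \<le> 1 * sigma v" using a by (intro mult_right_mono) auto
    then show "c s * sigma v \<le> sigma v" by simp
  qed
  have NE: "utility V S sigma R d w' v \<le> utility V S sigma R d w0 v"
    if v: "v \<in> V" and oth: "\<forall>v'. v' \<noteq> v \<longrightarrow> w' v' = w0 v'"
      and bnd: "\<forall>s\<in>S. 0 \<le> w' v s \<and> w' v s \<le> sigma v" for v w'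
  proof -
    define Ot where "Ot = (\<Sum>v'\<in>V-{v}. sigma v')"
    have Onn: "Ot \<ge> 0" unfolding Ot_def using assms(5) by (intro sum_nonneg) (auto intro: less_imp_le)
    have sv: "sigma v > 0" using assms(5) v by simp
    define A where "A s = c s * Ot" for s
    have sumA: "(\<Sum>v'\<in>V-{v}. w0 v' s) = A s" for s
      by (simp add: A_def Ot_def w0_def sum_distrib_left)
    have tot': "(\<Sum>v'\<in>V. w' v' s) = w' v s + A s" for s
    proof -
      have "(\<Sum>v'\<in>V. w' v' s) = w' v s + (\<Sum>v'\<in>V-{v}. w' v' s)"
        using sum.remove[OF assms(1) v] by blast
      also have "(\<Sum>v'\<in>V-{v}. w' v' s) = (\<Sum>v'\<in>V-{v}. w0 v' s)"
        using oth by (intro sum.cong) auto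
      finally show ?thesis using sumA by simp
    qed
    have tot0: "(\<Sum>v'\<in>V. w0 v' s) = w0 v s + A s" for s
      using sum.remove[OF assms(1) v, of "\<lambda>v'. w0 v' s"] sumA by simp
    have U0: "utility V S sigma R d w0 v = (\<Sum>s\<in>S. R s * (w0 v s / (w0 v s + A s)))"
      unfolding utility_def deg[OF v] if_P[OF order_refl] using tot0 cpos sv
      by (intro sum.cong) (auto simp: w0_def)
    define lam where "lam = T * Ot / (d * (sigma v + Ot)^2)"
    have lam_nn: "lam \<ge> 0" using Tpos Onn assms(7) by (simp add: lam_def)
    have coef: "R s * (A s / (w0 v s + A s)^2) = lam" if s: "s \<in> S" for s
    proof -
      have e1: "w0 v s + A s = c s * (sigma v + Ot)" by (simp add: w0_def A_def algebra_simps)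
      have e2: "R s = c s * T / d" using assms(7) Tpos by (simp add: c_def)
      have g: "\<And>c T d Q z::real. c \<noteq> 0 \<Longrightarrow> d \<noteq> 0 \<Longrightarrow> z \<noteq> 0 \<Longrightarrow>
           (c*T/d)*((c*Q)/(c*z)^2) = T*Q/(d*z^2)"
        by (simp add: field_simps power2_eq_square)
      have "R s * (A s / (w0 v s + A s)^2) = (c s*T/d)*((c s*Ot)/(c s*(sigma v + Ot))^2)"
        unfolding e1 e2 by (simp only: A_def)
      also have "\<dots> = lam" unfolding lam_def
        by (rule g) (use cpos[OF s] sv Onn assms(7) in auto)
      finally show ?thesis .
    qed
    show ?thesis
    proof (cases "restaking_degree S sigma w' v \<le> d")
      case False
      have "0 \<le> utility V S sigma R d w0 v" unfolding U0
      proof (intro sum_nonneg)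
        fix s assume s: "s \<in> S"
        have "0 \<le> w0 v s" "0 \<le> A s" using cpos[OF s] sv Onn by (auto simp: w0_def A_def)
        then show "0 \<le> R s * (w0 v s / (w0 v s + A s))" using assms(6)[OF s] by simp
      qed
      then show ?thesis using False by (simp add: utility_def)
    next
      case True
      then have bud: "(\<Sum>s\<in>S. w' v s) \<le> d * sigma v"
        using sv by (simp add: restaking_degree_def divide_le_eq)
      have "utility V S sigma R d w' v =
          (\<Sum>s\<in>S. R s * (if w' v s = 0 then 0 else w' v s / (w' v s + A s)))"
        unfolding utility_def if_P[OF True] by (rule sum.cong) (auto simp: tot')
      also have "\<dots> \<le> (\<Sum>s\<in>S. R s * (w0 v s / (w0 v s + A s)
                     + A s / (w0 v s + A s)^2 * (w' v s - w0 v s)))"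
      proof (intro sum_mono mult_left_mono)
        fix s assume s: "s \<in> S"
        show "0 \<le> R s" using assms(6)[OF s] by simp
        have "0 < w0 v s" "0 \<le> A s" using cpos[OF s] sv Onn by (auto simp: w0_def A_def)
        then show "(if w' v s = 0 then 0 else w' v s / (w' v s + A s)) \<le> w0 v s / (w0 v s + A s)
                     + A s / (w0 v s + A s)^2 * (w' v s - w0 v s)"
          using bnd s by (intro tangent) auto
      qed
      also have "\<dots> = utility V S sigma R d w0 v + lam * ((\<Sum>s\<in>S. w' v s) - (\<Sum>s\<in>S. w0 v s))"
      proof -
        have "(\<Sum>s\<in>S. R s * (w0 v s / (w0 v s + A s)
                     + A s / (w0 v s + A s)^2 * (w' v s - w0 v s)))
           = (\<Sum>s\<in>S. R s * (w0 v s / (w0 v s + A s)) + lam * (w' v s - w0 v s))"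
        proof (intro sum.cong refl)
          fix s assume "s \<in> S"
          then have "R s * (A s / (w0 v s + A s)^2) * (w' v s - w0 v s) = lam * (w' v s - w0 v s)"
            using coef by simp
          then show "R s * (w0 v s / (w0 v s + A s)
                     + A s / (w0 v s + A s)^2 * (w' v s - w0 v s)) = R s * (w0 v s / (w0 v s + A s)) + lam * (w' v s - w0 v s)"
            by (simp only: distrib_left mult.assoc)
        qed
        also have "\<dots> = utility V S sigma R d w0 v + lam * ((\<Sum>s\<in>S. w' v s) - (\<Sum>s\<in>S. w0 v s))"
          unfolding U0 by (simp add: sum.distrib sum_distrib_left[symmetric] sum_subtractf)
        finally show ?thesis .
      qed
      also have "(\<Sum>s\<in>S. w0 v s) = d * sigma v"
        by (simp add: w0_def sum_distrib_right[symmetric] sumc)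
      also have "utility V S sigma R d w0 v + lam * ((\<Sum>s\<in>S. w' v s) - d * sigma v)
                  \<le> utility V S sigma R d w0 v"
        using lam_nn bud by (simp add: mult_nonneg_nonpos)
      finally show ?thesis .
    qed
  qed
  show ?thesis unfolding W nash_equilibrium_def using feas NE deg by blast
qed

end
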